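(* For every $n\ge 0$, $L(C_n)=B_n$, where the Bernoulli numbers are defined by $\sum_{n\ge0}B_n\frac{x^n}{n!}=\frac{x}{e^x-1}$. Equivalently, with $L_\sigma:=L\circ A_\sigma^{-1}$, $L_\sigma(C_n)=B_n/n!$.
   Context: Let $k$ be a field of characteristic $0$. Rooted trees are finite and non-planar; $\bullet$ is the one-vertex tree. $\mathcal H$ is the free commutative $k$-algebra generated by isomorphism classes of rooted trees with at least one edge, with unit identified with $\bullet$. A subforest of a rooted tree $t$ is either $\bullet$ or a nonempty set of pairwise vertex-disjoint subtrees each with at least one edge, identified with the product of its components; $t/s$ is the tree obtained by contracting each component of $s$ to a vertex. $\mathcal H$ is a Hopf algebra with multiplicative coproduct $\Delta(t)=\sum_s s\otimes t/s$ over subforests (as subsets), antipode $S$, convolution $f\star g=(f\otimes g)\circ\Delta$. The tree factorial: $\bullet!=1$, $B_+(t_1\cdots t_n)!=v(B_+(t_1\cdots t_n))\prod_jt_j!$, with $B_+$ grafting on a new root and $v$ the number of vertices. $E$ is the character of $\mathcal H$ with $E(t)=1/t!$, and $L=E\circ S$ its $\star$-inverse. $C_n$ is the corolla with $n$ edges ($C_0=\bullet$). $A_\sigma(s)=\sigma(s)s$ for forests $s=t_1\cdots t_m$, $\sigma(s)=\prod|\mathrm{Aut}(t_j)|$. *)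

theory Defs
  imports Main "HOL-Computational_Algebra.Formal_Power_Series"
begin

(* Rooted trees are represented by planar representatives; all notions below are
   invariant under reordering children, so they descend to isomorphism classes. *)
datatype ptree = PNode "ptree list"

(* A rooted tree together with a marking of its edges (edge to each child marked or not).
   Subsets F of the edge set of t correspond bijectively to subforests of t
   (F = {} is the subforest \<bullet>; the components of F are the subtrees). *)
datatype mtree = MNode "(bool \<times> mtree) list"

fun nverts :: "ptree \<Rightarrow> nat" where
  "nverts (PNode ts) = Suc (sum_list (map nverts ts))"

definition nedges :: "ptree \<Rightarrow> nat" where
  "nedges t = nverts t - 1"

fun tfact :: "ptree \<Rightarrow> nat" where
  "tfact (PNode ts) = nverts (PNode ts) * prod_list (map tfact ts)"

fun markings :: "ptree \<Rightarrow> mtree list" where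
  "markings (PNode ts) =
     map MNode (product_lists (map (\<lambda>t. concat (map (\<lambda>b. map (\<lambda>m. (b, m)) (markings t)) [False, True])) ts))"

fun nmarked :: "mtree \<Rightarrow> nat" where
  "nmarked (MNode cs) = sum_list (map (\<lambda>bc. (if fst bc then 1 else 0) + nmarked (snd bc)) cs)"

definition hasmark :: "mtree \<Rightarrow> bool" where
  "hasmark m = (case m of MNode cs \<Rightarrow> list_ex fst cs)"

(* the component of marked edges containing the root *)
fun comp :: "mtree \<Rightarrow> ptree" where
  "comp (MNode cs) = PNode (concat (map (\<lambda>bc. if fst bc then [comp (snd bc)] else []) cs))"

(* components (with >= 1 edge) not containing the root *)
fun rest :: "mtree \<Rightarrow> ptree list" where
  "rest (MNode cs) = concat (map (\<lambda>bc. if fst bc then rest (snd bc)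
       else (if hasmark (snd bc) then [comp (snd bc)] else []) @ rest (snd bc)) cs)"

(* the subforest s determined by the marking: list of its components (empty list = \<bullet>) *)
definition forest :: "mtree \<Rightarrow> ptree list" where
  "forest m = (if hasmark m then [comp m] else []) @ rest m"

(* children of the contracted tree t/s *)
fun contr :: "mtree \<Rightarrow> ptree list" where
  "contr (MNode cs) = concat (map (\<lambda>bc. if fst bc then contr (snd bc) else [PNode (contr (snd bc))]) cs)"

definition quot :: "mtree \<Rightarrow> ptree" where
  "quot m = PNode (contr m)"

definition Echar :: "ptree \<Rightarrow> 'a::field_char_0" where
  "Echar t = 1 / of_nat (tfact t)"

(* L = E \<circ> S, computed as the \<star>-inverse of E:
   for t with at least one edge,  \<Sum>_{s subforest of t} L(s) E(t/s) = 0,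
   i.e. L(t) = - \<Sum>_{s \<noteq> t} L(s) E(t/s), with L multiplicative on forests, L(\<bullet>) = 1.
   Lf k is the recursion with fuel k; it is exact on trees with at most k edges. *)
fun Lf :: "nat \<Rightarrow> ptree \<Rightarrow> 'a::field_char_0" where
  "Lf 0 t = 1"
| "Lf (Suc k) t = (if nedges t = 0 then 1 else
     - sum_list (map (\<lambda>m. prod_list (map (Lf k) (forest m)) * Echar (quot m))
                    (filter (\<lambda>m. nmarked m \<noteq> nedges t) (markings t))))"

definition Lchar :: "ptree \<Rightarrow> 'a::field_char_0" where
  "Lchar t = Lf (nedges t) t"

definition corolla :: "nat \<Rightarrow> ptree" where
  "corolla n = PNode (replicate n (PNode []))"

(* vertices as paths from the root *)
fun is_vert :: "ptree \<Rightarrow> nat list \<Rightarrow> bool" where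
  "is_vert (PNode ts) [] = True"
| "is_vert (PNode ts) (i # p) = (i < length ts \<and> is_vert (ts ! i) p)"

definition verts :: "ptree \<Rightarrow> nat list set" where
  "verts t = {p. is_vert t p}"

definition aut_card :: "ptree \<Rightarrow> nat" where
  "aut_card t = card {f. bij_betw f (verts t) (verts t) \<and> f [] = []
      \<and> (\<forall>p\<in>verts t. p \<noteq> [] \<longrightarrow> f (butlast p) = butlast (f p))
      \<and> (\<forall>p. p \<notin> verts t \<longrightarrow> f p = p)}"

(* L_\<sigma> = L \<circ> A_\<sigma>^{-1} on a tree t:  L(t / \<sigma>(t)) *)
definition Lsigma :: "ptree \<Rightarrow> 'a::field_char_0" where
  "Lsigma t = Lchar t / of_nat (aut_card t)"

definition bernoulli :: "nat \<Rightarrow> 'a::field_char_0" where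
  "bernoulli n = fact n * fps_nth (fps_X / (fps_exp 1 - 1)) n"

end

theory Submission
  imports Defs "HOL-Combinatorics.Permutations"
begin


definition hB :: "'a::field_char_0 fps" where "hB = Abs_fps (\<lambda>n. 1 / fact (Suc n))"

lemma exp_eq: "(fps_exp 1 - 1 :: 'a::field_char_0 fps) = hB * fps_X"
proof (rule fps_ext)
  fix n show "fps_nth (fps_exp 1 - 1 :: 'a fps) n = fps_nth (hB * fps_X) n"
    by (cases n) (simp_all add: hB_def algebra_simps)
qed

lemma bern_fps: "(fps_X / (fps_exp 1 - 1) :: 'a::field_char_0 fps) * hB = 1"
proof -
  have h0: "fps_nth hB 0 \<noteq> (0::'a)" by (simp add: hB_def)
  have "(fps_X / (fps_exp 1 - 1) :: 'a fps) = (1 * fps_X) / (hB * fps_X)"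
    by (simp add: exp_eq)
  also have "\<dots> = 1 / hB" by (rule fps_divide_cancel) simp
  also have "\<dots> = inverse hB" using h0 by (simp add: fps_divide_unit)
  finally show ?thesis using h0 by (simp add: inverse_mult_eq_1)
qed

lemma aux_field: "J\<noteq>0 \<Longrightarrow> K\<noteq>0 \<Longrightarrow> m\<noteq>0 \<Longrightarrow> (A::'a::field)*(b/J*(1/(m*K))) = (A/(J*K))*b/m"
  by (simp add: field_simps)

lemma bern_rec:
  assumes "n > 0"
  shows "(bernoulli n :: 'a::field_char_0) =
    - (\<Sum>j<n. of_nat (n choose j) * bernoulli j / of_nat (n - j + 1))"
proof -
  define f :: "'a fps" where "f = fps_X / (fps_exp 1 - 1)"
  have fn: "fps_nth f j = bernoulli j / fact j" for j by (simp add: bernoulli_def f_def)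
  have "fps_nth (f * hB) n = 0" using assms by (simp add: f_def bern_fps)
  hence "(\<Sum>j=0..n. fps_nth f j * fps_nth hB (n - j)) = 0" by (simp add: fps_mult_nth)
  hence "(\<Sum>j\<le>n. bernoulli j / fact j * (1 / fact (Suc (n - j)))) = (0::'a)"
    unfolding atLeast0AtMost fn hB_def fps_nth_Abs_fps by simp_all
  hence "fact n * (\<Sum>j\<le>n. bernoulli j / fact j * (1 / fact (Suc (n - j)))) = (0::'a)" by simp
  hence S: "(\<Sum>j\<le>n. of_nat (n choose j) * bernoulli j / of_nat (n - j + 1)) = (0::'a)"
  proof -
    have X: "(fact n :: 'a) * (bernoulli j / fact j * (1 / fact (Suc (n - j)))) = of_nat (n choose j) * bernoulli j / of_nat (n - j + 1)"
      if "j \<le> n" for j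
    proof -
      have F: "(fact (Suc (n - j)) :: 'a) = of_nat (n - j + 1) * fact (n - j)" by simp
      have "(fact n :: 'a) * (bernoulli j / fact j * (1 / fact (Suc (n - j)))) =
            fact n * (bernoulli j / fact j * (1 / (of_nat (n - j + 1) * fact (n - j))))"
        by (simp only: F)
      also have "\<dots> = (fact n / (fact j * fact (n - j))) * bernoulli j / (of_nat (n - j + 1) :: 'a)"
        by (rule aux_field) (simp_all del: of_nat_Suc add: of_nat_eq_0_iff)
      also have "\<dots> = of_nat (n choose j) * bernoulli j / of_nat (n - j + 1)"
        by (simp only: binomial_fact[OF that])
      finally show ?thesis .
    qed
    have "(fact n :: 'a) * (\<Sum>j\<le>n. bernoulli j / fact j * (1 / fact (Suc (n - j)))) =
       (\<Sum>j\<le>n. of_nat (n choose j) * bernoulli j / of_nat (n - j + 1))"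
      unfolding sum_distrib_left by (rule sum.cong[OF refl]) (rule X, simp)
    thus "(fact n :: 'a) * (\<Sum>j\<le>n. bernoulli j / fact j * (1 / fact (Suc (n - j)))) = 0 \<Longrightarrow> ?thesis"
      by simp
  qed
  have "(\<Sum>j\<le>n. of_nat (n choose j) * bernoulli j / of_nat (n - j + 1)) =
        (\<Sum>j<n. of_nat (n choose j) * bernoulli j / of_nat (n - j + 1)) + (bernoulli n :: 'a)"
    by (simp add: lessThan_Suc_atMost[symmetric])
  with S show ?thesis by (simp add: eq_neg_iff_add_eq_0 add.commute)
qed

lemma bern0: "bernoulli 0 = (1::'a::field_char_0)"
proof -
  have "fps_nth ((fps_X / (fps_exp 1 - 1) :: 'a fps) * hB) 0 = 1" by (simp add: bern_fps)
  thus ?thesis by (simp add: bernoulli_def hB_def fps_mult_nth)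
qed



abbreviation "ml \<equiv> MNode []"

lemma nverts_cor: "nverts (corolla m) = Suc m"
  by (simp add: corolla_def sum_list_replicate)
lemma nedges_cor: "nedges (corolla m) = m"
  by (simp add: nedges_def nverts_cor)
lemma tfact_cor: "tfact (corolla m) = Suc m"
proof -
  have "tfact (corolla m) = nverts (corolla m) * prod_list (map tfact (replicate m (PNode [])))"
    unfolding corolla_def by (simp only: tfact.simps)
  thus ?thesis by (simp add: nverts_cor)
qed

lemma markings_cor: "markings (corolla n) = map MNode (product_lists (replicate n [(False, ml), (True, ml)]))"
  by (simp add: corolla_def map_replicate)

lemma p1: "\<forall>x\<in>set cs. snd x = ml \<Longrightarrow> nmarked (MNode cs) = length (filter fst cs)"
  by (induction cs) auto
lemma p2: "hasmark (MNode cs) = (filter fst cs \<noteq> [])"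
  by (induction cs) (auto simp: hasmark_def)
lemma p3: "\<forall>x\<in>set cs. snd x = ml \<Longrightarrow> comp (MNode cs) = corolla (length (filter fst cs))"
  by (induction cs) (auto simp: corolla_def)
lemma hm0: "hasmark ml = False" by (simp add: hasmark_def)
lemma rest_ml: "rest ml = []" by (simp only: rest.simps list.map concat.simps)
lemma rest_Cons: "rest (MNode (x # cs)) = (if fst x then rest (snd x)
       else (if hasmark (snd x) then [comp (snd x)] else []) @ rest (snd x)) @ rest (MNode cs)"
  by (simp only: rest.simps list.map concat.simps)
lemma p4: "\<forall>x\<in>set cs. snd x = ml \<Longrightarrow> rest (MNode cs) = []"
proof (induction cs)
  case Nil show ?case by (rule rest_ml)
next
  case (Cons a cs)
  have 1: "snd a = ml" using Cons.prems by simp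
  have 2: "rest (MNode cs) = []" using Cons.prems by (intro Cons.IH) simp
  show ?case unfolding rest_Cons 1 2 rest_ml hm0 by simp
qed
lemma p5: "\<forall>x\<in>set cs. snd x = ml \<Longrightarrow> contr (MNode cs) = replicate (length (filter (\<lambda>x. \<not> fst x) cs)) (PNode [])"
  by (induction cs) auto

lemma props:
  assumes "\<forall>x\<in>set cs. snd x = ml"
  shows "nmarked (MNode cs) = length (filter fst cs)
       \<and> hasmark (MNode cs) = (filter fst cs \<noteq> [])
       \<and> comp (MNode cs) = corolla (length (filter fst cs))
       \<and> rest (MNode cs) = []
       \<and> contr (MNode cs) = replicate (length (filter (\<lambda>x. \<not> fst x) cs)) (PNode [])"
  using assms p1 p2 p3 p4 p5 by blast

lemma count_lemma:
  "sum_list (map (\<lambda>cs. G (length (filter fst cs))) (product_lists (replicate n [(False, l), (True, l)])))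
   = (\<Sum>j\<le>n. of_nat (n choose j) * (G j :: 'a::comm_semiring_1))"
proof (induction n arbitrary: G)
  case 0 thus ?case by simp
next
  case (Suc n)
  have "sum_list (map (\<lambda>cs. G (length (filter fst cs))) (product_lists (replicate (Suc n) [(False, l), (True, l)])))
     = sum_list (map (\<lambda>cs. G (length (filter fst cs))) (product_lists (replicate n [(False, l), (True, l)])))
     + sum_list (map (\<lambda>cs. (G \<circ> Suc) (length (filter fst cs))) (product_lists (replicate n [(False, l), (True, l)])))"
    by (simp add: comp_def)
  also have "\<dots> = (\<Sum>j\<le>n. of_nat (n choose j) * G j) + (\<Sum>j\<le>n. of_nat (n choose j) * G (Suc j))"
    using Suc.IH[of G] Suc.IH[of "G \<circ> Suc"] by simp
  also have "\<dots> = (\<Sum>j\<le>Suc n. of_nat (Suc n choose j) * G j)"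
  proof -
    have A: "(\<Sum>j\<le>n. of_nat (n choose j) * G j) = G 0 + (\<Sum>j\<le>n. of_nat (n choose Suc j) * G (Suc j))"
    proof -
      have "(\<Sum>j\<le>n. of_nat (n choose j) * G j) = G 0 + (\<Sum>j<n. of_nat (n choose Suc j) * G (Suc j))"
        by (subst sum.atMost_shift) simp
      also have "(\<Sum>j<n. of_nat (n choose Suc j) * G (Suc j)) = (\<Sum>j\<le>n. of_nat (n choose Suc j) * G (Suc j))"
        unfolding lessThan_Suc_atMost[symmetric] sum.lessThan_Suc by (simp add: binomial_eq_0)
      finally show ?thesis .
    qed
    have "(\<Sum>j\<le>Suc n. of_nat (Suc n choose j) * G j) = G 0 + (\<Sum>j\<le>n. of_nat (Suc n choose Suc j) * G (Suc j))"
      by (subst sum.atMost_Suc_shift) simp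
    also have "(\<Sum>j\<le>n. of_nat (Suc n choose Suc j) * G (Suc j)) = (\<Sum>j\<le>n. of_nat (n choose j) * G (Suc j)) + (\<Sum>j\<le>n. of_nat (n choose Suc j) * G (Suc j))"
      by (simp only: sum.distrib[symmetric] binomial_Suc_Suc of_nat_add distrib_right)
    finally show ?thesis using A by (simp only: add_ac)
  qed
  finally show ?case .
qed



lemma sum_filter_if: "sum_list (map f (filter P xs)) = sum_list (map (\<lambda>x. if P x then f x else (0::'a::monoid_add)) xs)"
  by (induction xs) auto

lemma Lf_cor: "j \<le> k \<Longrightarrow> (Lf k (corolla j) :: 'a::field_char_0) = bernoulli j"
proof (induction k arbitrary: j)
  case 0 thus ?case by (simp add: bern0)
next
  case (Suc k)
  show ?case
  proof (cases "j = 0")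
    case True thus ?thesis by (simp add: nedges_cor bern0)
  next
    case False
    define G :: "nat \<Rightarrow> 'a" where "G i = (if i \<noteq> j then (if i = 0 then 1 else Lf k (corolla i)) * (1 / of_nat (Suc (j - i))) else 0)" for i
    define g where "g = (\<lambda>m. if nmarked m \<noteq> nedges (corolla j) then prod_list (map (Lf k) (forest m)) * Echar (quot m) else (0::'a))"
    have gG: "g (MNode cs) = G (length (filter fst cs))" if cs: "cs \<in> set (product_lists (replicate j [(False, ml), (True, ml)]))" for cs
    proof -
      have len: "length cs = j" using in_set_product_lists_length[OF cs] by simp
      have "list_all2 (\<lambda>x ys. x \<in> set ys) cs (replicate j [(False, ml), (True, ml)])"
        using cs product_lists_set by blast
      hence "\<forall>x\<in>set cs. x \<in> {(False, ml), (True, ml)}"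
      proof (intro ballI)
        fix x assume "list_all2 (\<lambda>x ys. x \<in> set ys) cs (replicate j [(False, ml), (True, ml)])" "x \<in> set cs"
        then obtain p where p: "p < length cs" "cs ! p = x" by (auto simp: in_set_conv_nth)
        from list_all2_nthD[OF \<open>list_all2 _ _ _\<close> p(1)] p len show "x \<in> {(False, ml), (True, ml)}" by simp
      qed
      hence all: "\<forall>x\<in>set cs. snd x = ml" by auto
      note P = props[OF all]
      define i where "i = length (filter fst cs)"
      have il: "i \<le> j" using len i_def by (metis length_filter_le)
      have nn: "length (filter (\<lambda>x. \<not> fst x) cs) = j - i"
        using sum_length_filter_compl[of fst cs] len i_def by simp
      have fo: "forest (MNode cs) = (if i = 0 then [] else [corolla i])"
        using P i_def by (simp add: forest_def)
      have qu: "quot (MNode cs) = corolla (j - i)"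
        using P nn by (simp add: quot_def corolla_def)
      show ?thesis
        unfolding g_def G_def i_def[symmetric] using P fo qu
        by (simp add: i_def nedges_cor Echar_def tfact_cor)
    qed
    have "(Lf (Suc k) (corolla j) :: 'a) = - sum_list (map g (markings (corolla j)))"
      using False by (simp add: nedges_cor sum_filter_if g_def)
    also have "sum_list (map g (markings (corolla j))) =
        sum_list (map (\<lambda>cs. G (length (filter fst cs))) (product_lists (replicate j [(False, ml), (True, ml)])))"
      unfolding markings_cor map_map
      by (rule arg_cong[where f=sum_list], rule map_cong[OF refl]) (simp add: gG)
    also have "\<dots> = (\<Sum>i\<le>j. of_nat (j choose i) * G i)" by (rule count_lemma)
    also have "\<dots> = (\<Sum>i<j. of_nat (j choose i) * G i)"
      by (simp add: lessThan_Suc_atMost[symmetric] G_def)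
    also have "\<dots> = (\<Sum>i<j. of_nat (j choose i) * bernoulli i / of_nat (j - i + 1))"
    proof (rule sum.cong[OF refl])
      fix i assume "i \<in> {..<j}"
      hence ij: "i < j" by simp
      have "(if i = 0 then 1 else Lf k (corolla i)) = (bernoulli i :: 'a)"
        using Suc.IH[of i] Suc.prems ij by (auto simp: bern0)
      thus "of_nat (j choose i) * G i = of_nat (j choose i) * bernoulli i / of_nat (j - i + 1)"
        using ij by (simp add: G_def)
    qed
    finally have E: "(Lf (Suc k) (corolla j) :: 'a) = - (\<Sum>i<j. of_nat (j choose i) * bernoulli i / of_nat (j - i + 1))" .
    have B: "(bernoulli j :: 'a) = - (\<Sum>i<j. of_nat (j choose i) * bernoulli i / of_nat (j - i + 1))"
      using bern_rec[of j] False by simp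
    show ?thesis by (rule trans[OF E B[symmetric]])
  qed
qed



lemma verts_cor: "verts (corolla n) = insert [] ((\<lambda>i. [i]) ` {..<n})"
proof -
  have "is_vert (corolla n) p \<longleftrightarrow> p = [] \<or> (\<exists>i<n. p = [i])" for p
  proof (cases p)
    case Nil thus ?thesis by (simp add: corolla_def)
  next
    case (Cons i q)
    thus ?thesis by (cases q) (auto simp: corolla_def)
  qed
  thus ?thesis by (auto simp: verts_def)
qed

definition Phi :: "(nat \<Rightarrow> nat) \<Rightarrow> nat list \<Rightarrow> nat list" where
  "Phi \<pi> p = (if length p = 1 then [\<pi> (hd p)] else p)"



definition isAut :: "nat list set \<Rightarrow> (nat list \<Rightarrow> nat list) \<Rightarrow> bool" where
  "isAut V f = (bij_betw f V V \<and> f [] = []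
      \<and> (\<forall>p\<in>V. p \<noteq> [] \<longrightarrow> f (butlast p) = butlast (f p))
      \<and> (\<forall>p. p \<notin> V \<longrightarrow> f p = p))"

lemma phi_in:
  assumes p: "\<pi> permutes {..<n}" and V: "V = insert [] ((\<lambda>i. [i]) ` {..<n})"
  shows "isAut V (Phi \<pi>)"
proof -
  have lt: "i < n \<Longrightarrow> \<pi> i < n" for i using p permutes_in_image by fastforce
  have lt': "i < n \<Longrightarrow> inv \<pi> i < n" for i using permutes_inv[OF p] permutes_in_image by fastforce
  have bij: "bij_betw (Phi \<pi>) V V"
  proof (rule bij_betw_byWitness[where f' = "Phi (inv \<pi>)"])
    show "\<forall>a\<in>V. Phi (inv \<pi>) (Phi \<pi> a) = a"
      using permutes_inverses(2)[OF p] by (auto simp: V Phi_def)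
    show "\<forall>a'\<in>V. Phi \<pi> (Phi (inv \<pi>) a') = a'"
      using permutes_inverses(1)[OF p] by (auto simp: V Phi_def)
    show "Phi \<pi> ` V \<subseteq> V" using lt by (auto simp: V Phi_def)
    show "Phi (inv \<pi>) ` V \<subseteq> V" using lt' by (auto simp: V Phi_def)
  qed
  have out: "Phi \<pi> q = q" if "q \<notin> V" for q
  proof (cases "length q = 1")
    case True
    then obtain i where q: "q = [i]" by (cases q) auto
    hence "i \<notin> {..<n}" using that V by auto
    hence "\<pi> i = i" using permutes_not_in[OF p] by blast
    thus ?thesis by (simp add: q Phi_def)
  qed (simp add: Phi_def)
  have bl: "Phi \<pi> (butlast q) = butlast (Phi \<pi> q)" if qq: "q \<in> V" "q \<noteq> []" for q
  proof -
    obtain i where "q = [i]" using qq V by auto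
    thus ?thesis by (simp add: Phi_def)
  qed
  have z: "Phi \<pi> [] = []" by (simp add: Phi_def)
  show ?thesis unfolding isAut_def using bij out bl z by blast
qed



lemma phi_surj:
  assumes A: "isAut V f" and V: "V = insert [] ((\<lambda>i. [i]) ` {..<n})"
  shows "\<exists>\<pi>. \<pi> permutes {..<n} \<and> f = Phi \<pi>"
proof -
  have A': "bij_betw f V V \<and> f [] = [] \<and> (\<forall>q. q \<notin> V \<longrightarrow> f q = q)"
    using A unfolding isAut_def by blast
  have bij: "bij_betw f V V" using A' by (rule conjunct1)
  have f0: "f [] = []" using A' by blast
  have out: "\<And>q. q \<notin> V \<Longrightarrow> f q = q" using A' by blast
  have injf: "inj_on f V" using bij by (simp add: bij_betw_def)
  have e0: "[] \<in> V" using V by simp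
  have ei: "i < n \<Longrightarrow> [i] \<in> V" for i using V by simp
  define \<pi> where "\<pi> i = (if i < n then hd (f [i]) else i)" for i
  have fi: "f [i] = [\<pi> i] \<and> \<pi> i < n" if "i < n" for i
  proof -
    have iV: "[i] \<in> V" using ei that .
    have fV: "f [i] \<in> V" by (rule bij_betw_apply[OF bij iV])
    have ne: "f [i] \<noteq> []"
    proof
      assume "f [i] = []"
      hence "f [i] = f []" using f0 by simp
      hence "[i] = []" using inj_onD[OF injf _ iV e0] by blast
      thus False by simp
    qed
    from fV ne V obtain j where "j < n" "f [i] = [j]" by auto
    thus ?thesis using that by (simp add: \<pi>_def)
  qed
  have injp: "inj_on \<pi> {..<n}"
  proof (rule inj_onI)
    fix i i' assume ii: "i \<in> {..<n}" "i' \<in> {..<n}" "\<pi> i = \<pi> i'"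
    hence "f [i] = f [i']" using fi by simp
    hence "[i] = [i']" using inj_onD[OF injf _ ei ei] ii by simp
    thus "i = i'" by simp
  qed
  have sub: "\<pi> ` {..<n} \<subseteq> {..<n}" using fi by auto
  have "\<pi> ` {..<n} = {..<n}" using endo_inj_surj[OF _ sub injp] by simp
  hence "bij_betw \<pi> {..<n} {..<n}" using injp by (simp add: bij_betw_def)
  hence perm: "\<pi> permutes {..<n}" by (rule bij_imp_permutes) (simp add: \<pi>_def)
  have "f = Phi \<pi>"
  proof
    fix q show "f q = Phi \<pi> q"
    proof (cases "length q = 1")
      case True
      then obtain i where q: "q = [i]" by (cases q) auto
      show ?thesis
      proof (cases "i < n")
        case True thus ?thesis using fi by (simp add: q Phi_def)
      next
        case False
        hence "q \<notin> V" using V q by auto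
        thus ?thesis using out False by (simp add: q Phi_def \<pi>_def)
      qed
    next
      case False
      show ?thesis
      proof (cases "q = []")
        case True thus ?thesis using f0 by (simp add: Phi_def)
      next
        case ne: False
        hence "q \<notin> V" using V False by auto
        thus ?thesis using out False by (simp add: Phi_def)
      qed
    qed
  qed
  thus ?thesis using perm by blast
qed

lemma aut_cor: "aut_card (corolla n) = fact n"
proof -
  define V where "V = verts (corolla n)"
  have V: "V = insert [] ((\<lambda>i. [i]) ` {..<n})" by (simp add: V_def verts_cor)
  have ac: "aut_card (corolla n) = card {f. isAut V f}"
    unfolding aut_card_def isAut_def V_def ..
  have inj: "inj_on Phi {\<pi>. \<pi> permutes {..<n}}"
  proof (rule inj_onI)
    fix \<pi> \<sigma> assume "Phi \<pi> = Phi \<sigma>"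
    hence "Phi \<pi> [i] = Phi \<sigma> [i]" for i by simp
    hence "\<pi> i = \<sigma> i" for i by (simp add: Phi_def)
    thus "\<pi> = \<sigma>" by auto
  qed
  have img: "{f. isAut V f} = Phi ` {\<pi>. \<pi> permutes {..<n}}"
  proof
    show "Phi ` {\<pi>. \<pi> permutes {..<n}} \<subseteq> {f. isAut V f}"
    proof
      fix f assume "f \<in> Phi ` {\<pi>. \<pi> permutes {..<n}}"
      then obtain \<pi> where p: "\<pi> permutes {..<n}" and f: "f = Phi \<pi>" by blast
      show "f \<in> {f. isAut V f}" unfolding f mem_Collect_eq by (rule phi_in[OF p V])
    qed
    show "{f. isAut V f} \<subseteq> Phi ` {\<pi>. \<pi> permutes {..<n}}"
    proof
      fix f assume "f \<in> {f. isAut V f}"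
      hence "isAut V f" by simp
      then obtain \<pi> where "\<pi> permutes {..<n}" "f = Phi \<pi>" using phi_surj[OF _ V] by blast
      thus "f \<in> Phi ` {\<pi>. \<pi> permutes {..<n}}" by blast
    qed
  qed
  have "card {f. isAut V f} = card {\<pi>. \<pi> permutes {..<n}}" unfolding img by (rule card_image[OF inj])
  also have "\<dots> = fact n" by (rule card_permutations) auto
  finally show ?thesis using ac by simp
qed


theorem mainTheorem12:
  fixes n :: nat
  shows "(Lchar (corolla n) :: 'a::field_char_0) = bernoulli n
         \<and> (Lsigma (corolla n) :: 'a) = bernoulli n / fact n"
proof
  show L: "(Lchar (corolla n) :: 'a) = bernoulli n"
    unfolding Lchar_def nedges_cor by (rule Lf_cor) simp
  show "(Lsigma (corolla n) :: 'a) = bernoulli n / fact n"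
    unfolding Lsigma_def L aut_cor by simp
qed

end
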